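(* Let $m\ge2$ and $G=\langle x_1,x_2\mid c_{12}^m,\ \overline{c_{12}^{(x_1)}}\,c_{12}^{a_1},\ \overline{c_{12}^{(x_2)}}\,c_{12}^{a_2}\rangle$ with $a_1,a_2$ coprime to $m$, whose commutator subgroup $C$ is cyclic of order $m$ generated by $c_{12}$, and let $Z_{CG}=Z(G)\cap C$. If $\{x_1,x_2\}\subset\mathcal C_G(C)$ (equivalently $a_1=a_2=1$), then $Z_{CG}=C$. Otherwise, $Z_{CG}$ is non-trivial if and only if $\gcd(a_1-1,a_2-1,m)\neq1$.
   Context: Notation: $\bar g=g^{-1}$, $c_{gh}=\bar g\,\bar h\,g\,h$, $c^{(g)}=\bar g\,c\,g$, $c_{12}=c_{x_1x_2}$; $\mathcal C_G(C)$ is the centralizer of $C$ and $Z(G)$ the center of $G$. *)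

theory Defs
  imports "HOL-Algebra.Algebra"
begin

definition comm :: "('a, 'b) monoid_scheme \<Rightarrow> 'a \<Rightarrow> 'a \<Rightarrow> 'a" where
  "comm G g h = inv\<^bsub>G\<^esub> g \<otimes>\<^bsub>G\<^esub> inv\<^bsub>G\<^esub> h \<otimes>\<^bsub>G\<^esub> g \<otimes>\<^bsub>G\<^esub> h"

definition conj :: "('a, 'b) monoid_scheme \<Rightarrow> 'a \<Rightarrow> 'a \<Rightarrow> 'a" where
  "conj G c g = inv\<^bsub>G\<^esub> g \<otimes>\<^bsub>G\<^esub> c \<otimes>\<^bsub>G\<^esub> g"

definition group_center :: "('a, 'b) monoid_scheme \<Rightarrow> 'a set" where
  "group_center G = {z \<in> carrier G. \<forall>g \<in> carrier G. z \<otimes>\<^bsub>G\<^esub> g = g \<otimes>\<^bsub>G\<^esub> z}"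

definition centralizer :: "('a, 'b) monoid_scheme \<Rightarrow> 'a set \<Rightarrow> 'a set" where
  "centralizer G S = {g \<in> carrier G. \<forall>s \<in> S. g \<otimes>\<^bsub>G\<^esub> s = s \<otimes>\<^bsub>G\<^esub> g}"

end

theory Submission
  imports Defs
begin

lemma nt1: fixes A B k m :: int assumes "m dvd A*k" "m dvd B*k" "gcd (gcd A B) m = 1" shows "m dvd k"
proof -
  have "m dvd gcd (A*k) (B*k)" using assms by simp
  hence "m dvd gcd A B * k" by (metis dvd_mult2 mult_gcd_right)
  moreover have "coprime m (gcd A B)" using assms(3)
    by (simp add: coprime_iff_gcd_eq_1 gcd.commute)
  ultimately show ?thesis using coprime_dvd_mult_right_iff by blast
qed
lemma nt2: fixes A B m :: int assumes "m > 0" "gcd (gcd A B) m \<noteq> 1" shows "\<exists>k. m dvd A*k \<and> m dvd B*k \<and> \<not> m dvd k"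
proof -
  define d where "d = gcd (gcd A B) m"
  have "d > 0" using assms d_def by simp
  hence d2: "d \<ge> 2" using assms d_def by linarith
  have dm: "d dvd m" "d dvd A" "d dvd B" unfolding d_def by (auto intro: dvd_trans)
  then obtain q where q: "m = d * q" by blast
  have qp: "q > 0" using q `m>0` `d>0` by (simp add: zero_less_mult_iff)
  have "q < m" using q d2 qp by (metis less_le_trans mult_le_cancel_right1 not_le one_less_numeral_iff semiring_norm(76) linorder_not_le nat_mult_less_cancel_disj order.strict_trans2 mult_less_cancel_right1)
  hence "\<not> m dvd q" using qp by (simp add: zdvd_not_zless)
  moreover have "m dvd A*q" using dm(2) q by (metis dvd_def mult.commute mult.left_commute dvd_triv_right mult_dvd_mono)
  moreover have "m dvd B*q" using dm(3) q by (metis dvd_def mult.commute mult.left_commute dvd_triv_right mult_dvd_mono)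
  ultimately show ?thesis by blast
qed

lemma (in group) center_from_gens:
  assumes S: "S \<subseteq> carrier G" and gen: "generate G S = carrier G" and z: "z \<in> carrier G"
    and comm: "\<forall>s\<in>S. z \<otimes> s = s \<otimes> z"
  shows "z \<in> group_center G"
proof -
  define H where "H = {g \<in> carrier G. z \<otimes> g = g \<otimes> z}"
  have "subgroup H G"
  proof
    show "H \<subseteq> carrier G" unfolding H_def by auto
    show "\<one> \<in> H" unfolding H_def using z by simp
  next
    fix a b assume "a \<in> H" "b \<in> H"
    then have a: "a \<in> carrier G" "z \<otimes> a = a \<otimes> z" and b: "b \<in> carrier G" "z \<otimes> b = b \<otimes> z"
      unfolding H_def by auto
    have "z \<otimes> (a \<otimes> b) = a \<otimes> (z \<otimes> b)" using a z b by (metis m_assoc)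
    also have "\<dots> = (a \<otimes> b) \<otimes> z" using a z b by (simp add: m_assoc)
    finally show "a \<otimes> b \<in> H" unfolding H_def using a b by auto
  next
    fix a assume "a \<in> H"
    then have a: "a \<in> carrier G" "z \<otimes> a = a \<otimes> z" unfolding H_def by auto
    have "inv a \<otimes> (z \<otimes> a) \<otimes> inv a = inv a \<otimes> z" using a(1) z by (simp add: m_assoc)
    hence "inv a \<otimes> z = inv a \<otimes> (z \<otimes> a) \<otimes> inv a" by simp
    also have "\<dots> = inv a \<otimes> (a \<otimes> z) \<otimes> inv a" using a by simp
    also have "\<dots> = z \<otimes> inv a" using a z by (simp add: m_assoc[symmetric])
    finally have "inv a \<otimes> z = z \<otimes> inv a" .
    thus "inv a \<in> H" unfolding H_def using a by auto
  qed
  moreover have "S \<subseteq> H" using S comm unfolding H_def by auto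
  ultimately have "carrier G \<subseteq> H" using generate_subgroup_incl gen by metis
  thus ?thesis using z unfolding H_def group_center_def by auto
qed

lemma (in group) conj_int_pow:
  assumes x: "x \<in> carrier G" and c: "c \<in> carrier G"
  shows "inv x \<otimes> c [^] (k::int) \<otimes> x = (inv x \<otimes> c \<otimes> x) [^] k"
proof -
  have h: "(\<lambda>y. inv x \<otimes> y \<otimes> x) \<in> hom G G"
  proof (rule homI)
    fix a b assume "a \<in> carrier G" "b \<in> carrier G"
    then show "inv x \<otimes> (a \<otimes> b) \<otimes> x = (inv x \<otimes> a \<otimes> x) \<otimes> (inv x \<otimes> b \<otimes> x)"
    proof -
      have e: "x \<otimes> (inv x \<otimes> y) = y" if "y \<in> carrier G" for y
        using x that by (simp add: m_assoc[symmetric])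
      show ?thesis using x \<open>a \<in> carrier G\<close> \<open>b \<in> carrier G\<close> by (simp add: m_assoc e)
    qed
  qed (use x in auto)
  show ?thesis using hom_int_pow[OF h c] group_axioms by simp
qed

lemma (in group) l1: "a \<in> carrier G \<Longrightarrow> b \<in> carrier G \<Longrightarrow> inv a \<otimes> b = \<one> \<Longrightarrow> a = b"
  by (metis inv_solve_left one_closed r_one)

lemma (in group) l2: "a \<in> carrier G \<Longrightarrow> b \<in> carrier G \<Longrightarrow> a \<otimes> inv b = \<one> \<longleftrightarrow> a = b"
  using inv_equality by force

lemma (in group) comm_iff_conj:
  assumes x: "x \<in> carrier G" and z: "z \<in> carrier G"
  shows "(z \<otimes> x = x \<otimes> z) \<longleftrightarrow> inv x \<otimes> z \<otimes> x = z"
  using x z by (metis inv_solve_left m_assoc m_closed inv_closed)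

lemma (in group) main14:
  fixes x1 x2 :: 'a and m :: nat and a1 a2 :: int
  assumes x1: "x1 \<in> carrier G" and x2: "x2 \<in> carrier G"
    and gen: "generate G {x1, x2} = carrier G"
    and m: "m \<ge> 2"
    and cop1: "coprime a1 (int m)" and cop2: "coprime a2 (int m)"
    and r0: "comm G x1 x2 [^]\<^bsub>G\<^esub> m = \<one>\<^bsub>G\<^esub>"
    and r1: "inv\<^bsub>G\<^esub> (conj G (comm G x1 x2) x1) \<otimes>\<^bsub>G\<^esub> (comm G x1 x2 [^]\<^bsub>G\<^esub> a1) = \<one>\<^bsub>G\<^esub>"
    and r2: "inv\<^bsub>G\<^esub> (conj G (comm G x1 x2) x2) \<otimes>\<^bsub>G\<^esub> (comm G x1 x2 [^]\<^bsub>G\<^esub> a2) = \<one>\<^bsub>G\<^esub>"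
    and C: "derived G (carrier G) = generate G {comm G x1 x2}"
    and ordc: "group.ord G (comm G x1 x2) = m"
  shows "({x1, x2} \<subseteq> centralizer G (derived G (carrier G)) \<longrightarrow>
            group_center G \<inter> derived G (carrier G) = derived G (carrier G))
       \<and> (\<not> {x1, x2} \<subseteq> centralizer G (derived G (carrier G)) \<longrightarrow>
            (group_center G \<inter> derived G (carrier G) \<noteq> {\<one>\<^bsub>G\<^esub>} \<longleftrightarrow>
             gcd (gcd (a1 - 1) (a2 - 1)) (int m) \<noteq> 1))"

proof -
  define c where "c = comm G x1 x2"
  have c: "c \<in> carrier G" unfolding c_def comm_def using x1 x2 by simp
  have r1': "inv (inv x1 \<otimes> c \<otimes> x1) \<otimes> c [^] a1 = \<one>"
    using r1 unfolding c_def conj_def .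
  have conj1: "inv x1 \<otimes> c \<otimes> x1 = c [^] a1"
    by (rule l1[OF _ _ r1']) (simp_all add: x1 c)
  have r2': "inv (inv x2 \<otimes> c \<otimes> x2) \<otimes> c [^] a2 = \<one>"
    using r2 unfolding c_def conj_def .
  have conj2: "inv x2 \<otimes> c \<otimes> x2 = c [^] a2"
    by (rule l1[OF _ _ r2']) (simp_all add: x2 c)
  have Cc: "derived G (carrier G) = {c [^] (k::int) | k. k \<in> UNIV}"
    unfolding C c_def[symmetric] by (rule generate_pow[OF c])
  have oc: "ord c = m" using ordc unfolding c_def .
  have S: "{x1, x2} \<subseteq> carrier G" using x1 x2 by simp
  have cm: "c [^] (k::int) \<otimes> x = x \<otimes> c [^] k \<longleftrightarrow> int m dvd (a - 1) * k"
    if x: "x \<in> carrier G" and cj: "inv x \<otimes> c \<otimes> x = c [^] a" for x k a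
  proof -
    have "c [^] (k::int) \<otimes> x = x \<otimes> c [^] k \<longleftrightarrow> inv x \<otimes> c [^] k \<otimes> x = c [^] k"
      using comm_iff_conj x c by simp
    also have "inv x \<otimes> c [^] k \<otimes> x = c [^] (a * k)"
      using conj_int_pow[OF x c] cj c by (simp add: int_pow_pow)
    also have "(c [^] (a * k) = c [^] k) \<longleftrightarrow> c [^] (a * k - k) = \<one>"
      using c by (simp add: int_pow_diff l2)
    also have "\<dots> \<longleftrightarrow> int m dvd (a - 1) * k"
      using int_pow_eq_id[OF c] oc by (simp add: algebra_simps)
    finally show ?thesis .
  qed
  have cent: "c [^] (k::int) \<in> group_center G \<longleftrightarrow> int m dvd (a1 - 1) * k \<and> int m dvd (a2 - 1) * k" for k
  proof
    assume "c [^] k \<in> group_center G"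
    hence "c [^] k \<otimes> x1 = x1 \<otimes> c [^] k" "c [^] k \<otimes> x2 = x2 \<otimes> c [^] k"
      using x1 x2 unfolding group_center_def by auto
    thus "int m dvd (a1 - 1) * k \<and> int m dvd (a2 - 1) * k"
      using cm[OF x1 conj1] cm[OF x2 conj2] by simp
  next
    assume "int m dvd (a1 - 1) * k \<and> int m dvd (a2 - 1) * k"
    hence "c [^] k \<otimes> x1 = x1 \<otimes> c [^] k" "c [^] k \<otimes> x2 = x2 \<otimes> c [^] k"
      using cm[OF x1 conj1] cm[OF x2 conj2] by auto
    thus "c [^] k \<in> group_center G"
      using center_from_gens[OF S gen] c by auto
  qed
  have part1: "group_center G \<inter> derived G (carrier G) = derived G (carrier G)"
    if hyp: "{x1, x2} \<subseteq> centralizer G (derived G (carrier G))"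
  proof -
    have "z \<in> group_center G" if z: "z \<in> derived G (carrier G)" for z
    proof -
      have zc: "z \<in> carrier G" using z Cc c by auto
      have "\<forall>s\<in>{x1,x2}. z \<otimes> s = s \<otimes> z" using hyp z unfolding centralizer_def by auto
      thus ?thesis using center_from_gens[OF S gen zc] by simp
    qed
    thus ?thesis by auto
  qed
  have one_in: "\<one> \<in> group_center G \<inter> derived G (carrier G)"
    using Cc unfolding group_center_def by (auto intro!: exI[of _ 0])
  have mpos: "int m > 0" using m by simp
  have part2: "group_center G \<inter> derived G (carrier G) \<noteq> {\<one>} \<longleftrightarrow>
             gcd (gcd (a1 - 1) (a2 - 1)) (int m) \<noteq> 1"
  proof
    assume "group_center G \<inter> derived G (carrier G) \<noteq> {\<one>}"
    then obtain z where z: "z \<in> group_center G" "z \<in> derived G (carrier G)" "z \<noteq> \<one>"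
      using one_in by auto
    then obtain k where k: "z = c [^] (k::int)" using Cc by auto
    have dd: "int m dvd (a1 - 1) * k \<and> int m dvd (a2 - 1) * k" using cent[of k] z(1) k by simp
    have nd: "\<not> int m dvd k" using z(3) k int_pow_eq_id[OF c] oc by simp
    show "gcd (gcd (a1 - 1) (a2 - 1)) (int m) \<noteq> 1"
    proof
      assume "gcd (gcd (a1 - 1) (a2 - 1)) (int m) = 1"
      from nt1[OF dd[THEN conjunct1] dd[THEN conjunct2] this] nd show False by simp
    qed
  next
    assume g: "gcd (gcd (a1 - 1) (a2 - 1)) (int m) \<noteq> 1"
    obtain k where k: "int m dvd (a1 - 1) * k" "int m dvd (a2 - 1) * k" "\<not> int m dvd k"
      using nt2[OF mpos g] by blast
    have "c [^] k \<in> group_center G" using cent[of k] k(1,2) by blast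
    moreover have "c [^] k \<in> derived G (carrier G)" using Cc by auto
    moreover have "c [^] k \<noteq> \<one>" using k(3) int_pow_eq_id[OF c] oc by simp
    ultimately show "group_center G \<inter> derived G (carrier G) \<noteq> {\<one>}" by blast
  qed
  show ?thesis using part1 part2 by blast
qed


theorem corollary14p2:
  fixes G :: "('g, 'b) monoid_scheme" and x1 x2 :: 'g and m :: nat and a1 a2 :: int
  assumes grp: "group G"
    and x1: "x1 \<in> carrier G" and x2: "x2 \<in> carrier G"
    and gen: "generate G {x1, x2} = carrier G"
    and m: "m \<ge> 2"
    and cop1: "coprime a1 (int m)" and cop2: "coprime a2 (int m)"
    and r0: "comm G x1 x2 [^]\<^bsub>G\<^esub> m = \<one>\<^bsub>G\<^esub>"
    and r1: "inv\<^bsub>G\<^esub> (conj G (comm G x1 x2) x1) \<otimes>\<^bsub>G\<^esub> (comm G x1 x2 [^]\<^bsub>G\<^esub> a1) = \<one>\<^bsub>G\<^esub>"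
    and r2: "inv\<^bsub>G\<^esub> (conj G (comm G x1 x2) x2) \<otimes>\<^bsub>G\<^esub> (comm G x1 x2 [^]\<^bsub>G\<^esub> a2) = \<one>\<^bsub>G\<^esub>"
    and C: "derived G (carrier G) = generate G {comm G x1 x2}"
    and ordc: "group.ord G (comm G x1 x2) = m"
  shows "({x1, x2} \<subseteq> centralizer G (derived G (carrier G)) \<longrightarrow>
            group_center G \<inter> derived G (carrier G) = derived G (carrier G))
       \<and> (\<not> {x1, x2} \<subseteq> centralizer G (derived G (carrier G)) \<longrightarrow>
            (group_center G \<inter> derived G (carrier G) \<noteq> {\<one>\<^bsub>G\<^esub>} \<longleftrightarrow>
             gcd (gcd (a1 - 1) (a2 - 1)) (int m) \<noteq> 1))"

  using group.main14[OF grp x1 x2 gen m cop1 cop2 r0 r1 r2 C ordc] .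

end
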